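(* Let $f\in L^{N,\infty}(\Omega)$ be non-negative, let $h\colon[0,\infty)\to(0,\infty]$ be continuous with $h(s)>0$ for all $s\ge0$, and let $g\colon\Omega\times[0,\infty)\to[0,\infty)$ be a Carathéodory function. Assume there exist a ball $B$ with $\overline{B}\subset\Omega$, a constant $c>0$ and a function $\kappa\colon[0,\infty)\to[0,\infty)$ with $\lim_{s\to\infty}\kappa(s)=\infty$ such that $f(x)\ge c$ for a.e. $x\in B$ and $g(x,s)\ge\kappa(s)$ for a.e. $x\in B$ and all $s\ge0$. Then there exists $\tilde\lambda>0$ such that for every $\lambda\ge\tilde\lambda$ the problem $$-\Delta_1 u=\lambda h(u)f(x)+g(x,u)\ \text{in }\Omega,\qquad u=0\ \text{on }\partial\Omega$$ has no solution.
   Context: $\Omega\subset\mathbb{R}^N$ ($N\ge 2$) is a bounded open set with Lipschitz boundary, $\nu$ its outward unit normal. $\mathcal{DM}^\infty(\Omega)=\{z\in L^\infty(\Omega)^N:\operatorname{div} z \text{ is a Radon measure with finite total variation in }\Omega\}$. For $z\in\mathcal{DM}^\infty(\Omega)$ and $u\in BV(\Omega)\cap L^\infty(\Omega)$, the pairing $(z,Du)$ is the Radon measure defined by $\langle (z,Du),\varphi\rangle=-\int_\Omega u^*\varphi\operatorname{div}z-\int_\Omega u\,z\cdot\nabla\varphi$ for $\varphi\in C^1_c(\Omega)$, where $u^*$ is the precise representative of $u$. $[z,\nu]\in L^\infty(\partial\Omega)$ denotes Anzellotti's weak trace of the normal component of $z$ on $\partial\Omega$. A solution of $-\Delta_1 u=\lambda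 h(u)f+g(x,u)$ in $\Omega$, $u=0$ on $\partial\Omega$, is a non-negative $u\in BV(\Omega)\cap L^\infty(\Omega)$ with $h(u)f,\ g(x,u)\in L^1_{\rm loc}(\Omega)$ for which there exists $z\in\mathcal{DM}^\infty(\Omega)$ with $\|z\|_{L^\infty(\Omega)^N}\le1$ such that $-\operatorname{div}z=\lambda h(u)f+g(x,u)$ in $\mathcal{D}'(\Omega)$, $(z,Du)=|Du|$ as measures in $\Omega$, and $u+u[z,\nu]=0$ $\mathcal{H}^{N-1}$-a.e. on $\partial\Omega$. *)

theory Defs
  imports "HOL-Analysis.Analysis"
begin

definition omega_h :: "real \<Rightarrow> real" where
  "omega_h s = pi powr (s / 2) / Gamma (s / 2 + 1)"

definition hausdorff_approx :: "real \<Rightarrow> real \<Rightarrow> 'a::metric_space set \<Rightarrow> ennreal" where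
  "hausdorff_approx s \<delta> A =
     (INF C \<in> {C :: nat \<Rightarrow> 'a set. A \<subseteq> (\<Union>i. C i) \<and> (\<forall>i. bounded (C i) \<and> diameter (C i) \<le> \<delta>)}.
        (\<Sum>i. ennreal (omega_h s * (diameter (C i) / 2) powr s)))"

definition hausdorff_outer :: "real \<Rightarrow> 'a::metric_space set \<Rightarrow> ennreal" where
  "hausdorff_outer s A = (SUP \<delta> \<in> {0<..}. hausdorff_approx s \<delta> A)"

text \<open>H^s restricted to the Borel subsets of S (countably additive there).\<close>
definition hausdorff_measure :: "real \<Rightarrow> 'a::metric_space set \<Rightarrow> 'a measure" where
  "hausdorff_measure s S = measure_of S (sets (restrict_space borel S)) (hausdorff_outer s)"

abbreviation bdry_measure :: "'a::euclidean_space set \<Rightarrow> 'a measure" where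
  "bdry_measure \<Omega> \<equiv> hausdorff_measure (real DIM('a) - 1) (frontier \<Omega>)"

definition C1c_scalar :: "'a::euclidean_space set \<Rightarrow> ('a \<Rightarrow> real) \<Rightarrow> ('a \<Rightarrow> 'a) \<Rightarrow> bool" where
  "C1c_scalar U \<phi> d\<phi> \<longleftrightarrow>
     (\<forall>x. (\<phi> has_derivative (\<lambda>v. d\<phi> x \<bullet> v)) (at x)) \<and> continuous_on UNIV d\<phi> \<and>
     compact (closure {x. \<phi> x \<noteq> 0}) \<and> closure {x. \<phi> x \<noteq> 0} \<subseteq> U"

definition C1c_vector :: "'a::euclidean_space set \<Rightarrow> ('a \<Rightarrow> 'a) \<Rightarrow> ('a \<Rightarrow> 'a \<Rightarrow> 'a) \<Rightarrow> bool" where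
  "C1c_vector U \<phi> d\<phi> \<longleftrightarrow>
     (\<forall>x. (\<phi> has_derivative d\<phi> x) (at x)) \<and> (\<forall>v. continuous_on UNIV (\<lambda>x. d\<phi> x v)) \<and>
     compact (closure {x. \<phi> x \<noteq> 0}) \<and> closure {x. \<phi> x \<noteq> 0} \<subseteq> U"

definition vdiv :: "('a::euclidean_space \<Rightarrow> 'a \<Rightarrow> 'a) \<Rightarrow> 'a \<Rightarrow> real" where
  "vdiv d\<phi> x = (\<Sum>b\<in>Basis. d\<phi> x b \<bullet> b)"

definition lipschitz_boundary :: "'a::euclidean_space set \<Rightarrow> bool" where
  "lipschitz_boundary \<Omega> \<longleftrightarrow>
     (\<forall>x\<in>frontier \<Omega>. \<exists>r>0. \<exists>e. norm e = 1 \<and>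
        (\<exists>\<phi> L. L-lipschitz_on UNIV \<phi> \<and> (\<forall>y t. \<phi> (y + t *\<^sub>R e) = \<phi> y) \<and>
               \<Omega> \<inter> ball x r = {y \<in> ball x r. y \<bullet> e < \<phi> y}))"

text \<open>Measure-theoretic outward unit normal (Gauss--Green formula).\<close>
definition outward_normal :: "'a::euclidean_space set \<Rightarrow> ('a \<Rightarrow> 'a) \<Rightarrow> bool" where
  "outward_normal \<Omega> \<nu> \<longleftrightarrow>
     \<nu> \<in> borel_measurable (bdry_measure \<Omega>) \<and> (AE x in bdry_measure \<Omega>. norm (\<nu> x) = 1) \<and>
     (\<forall>\<phi> d\<phi>. C1c_vector UNIV \<phi> d\<phi> \<longrightarrow>
        (\<integral>x. vdiv d\<phi> x \<partial>lebesgue_on \<Omega>) = (\<integral>x. \<phi> x \<bullet> \<nu> x \<partial>bdry_measure \<Omega>))"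

definition finite_borel_on :: "'a::topological_space set \<Rightarrow> 'a measure \<Rightarrow> bool" where
  "finite_borel_on U \<mu> \<longleftrightarrow> finite_measure \<mu> \<and> sets \<mu> = sets (restrict_space borel U)"

text \<open>u \<in> BV(\<Omega>) with Du = \<sigma> |Du|, |Du| = \<mu> (polar decomposition).\<close>
definition BV_polar :: "'a::euclidean_space set \<Rightarrow> ('a \<Rightarrow> real) \<Rightarrow> 'a measure \<Rightarrow> ('a \<Rightarrow> 'a) \<Rightarrow> bool" where
  "BV_polar \<Omega> u \<mu> \<sigma> \<longleftrightarrow>
     integrable (lebesgue_on \<Omega>) u \<and> finite_borel_on \<Omega> \<mu> \<and> \<sigma> \<in> borel_measurable \<mu> \<and>
     (AE x in \<mu>. norm (\<sigma> x) = 1) \<and>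
     (\<forall>\<phi> d\<phi>. C1c_vector \<Omega> \<phi> d\<phi> \<longrightarrow>
        (\<integral>x. u x * vdiv d\<phi> x \<partial>lebesgue_on \<Omega>) = - (\<integral>x. \<phi> x \<bullet> \<sigma> x \<partial>\<mu>))"

text \<open>div z = \<theta> \<mu> is a Radon measure with finite total variation \<mu> = |div z| in \<Omega>.\<close>
definition div_polar :: "'a::euclidean_space set \<Rightarrow> ('a \<Rightarrow> 'a) \<Rightarrow> 'a measure \<Rightarrow> ('a \<Rightarrow> real) \<Rightarrow> bool" where
  "div_polar \<Omega> z \<mu> \<theta> \<longleftrightarrow>
     finite_borel_on \<Omega> \<mu> \<and> \<theta> \<in> borel_measurable \<mu> \<and> (AE x in \<mu>. \<bar>\<theta> x\<bar> = 1) \<and>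
     (\<forall>\<phi> d\<phi>. C1c_scalar \<Omega> \<phi> d\<phi> \<longrightarrow>
        (\<integral>x. \<phi> x * \<theta> x \<partial>\<mu>) = - (\<integral>x. z x \<bullet> d\<phi> x \<partial>lebesgue_on \<Omega>))"

definition linf_on :: "'a::euclidean_space set \<Rightarrow> ('a \<Rightarrow> real) \<Rightarrow> bool" where
  "linf_on \<Omega> u \<longleftrightarrow> u \<in> borel_measurable (lebesgue_on \<Omega>) \<and> (\<exists>M. AE x in lebesgue_on \<Omega>. \<bar>u x\<bar> \<le> M)"

definition L1_loc :: "'a::euclidean_space set \<Rightarrow> ('a \<Rightarrow> real) \<Rightarrow> bool" where
  "L1_loc \<Omega> F \<longleftrightarrow> F \<in> borel_measurable (lebesgue_on \<Omega>) \<and>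
     (\<forall>K. compact K \<and> K \<subseteq> \<Omega> \<longrightarrow> integrable (lebesgue_on K) F)"

text \<open>Marcinkiewicz space L^{N,\<infinity>}(\<Omega>), N = DIM('a).\<close>
definition weak_LN :: "'a::euclidean_space set \<Rightarrow> ('a \<Rightarrow> real) \<Rightarrow> bool" where
  "weak_LN \<Omega> f \<longleftrightarrow> f \<in> borel_measurable (lebesgue_on \<Omega>) \<and>
     (\<exists>C. \<forall>t>0. t * (measure (lebesgue_on \<Omega>) {x\<in>\<Omega>. \<bar>f x\<bar> > t}) powr (1 / real DIM('a)) \<le> C)"

definition caratheodory :: "'a::euclidean_space set \<Rightarrow> ('a \<Rightarrow> real \<Rightarrow> real) \<Rightarrow> bool" where
  "caratheodory \<Omega> g \<longleftrightarrow> (\<forall>s\<ge>0. (\<lambda>x. g x s) \<in> borel_measurable (lebesgue_on \<Omega>)) \<and>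
     (AE x in lebesgue_on \<Omega>. continuous_on {0..} (g x))"

text \<open>Precise representative: limit of ball averages where it exists, 0 otherwise.\<close>
definition precise_rep :: "('a::euclidean_space \<Rightarrow> real) \<Rightarrow> 'a \<Rightarrow> real" where
  "precise_rep u x =
     (let avg = (\<lambda>r. (\<integral>y. u y \<partial>lebesgue_on (ball x r)) / measure lebesgue (ball x r)) in
      if (\<exists>L. (avg \<longlongrightarrow> L) (at_right 0)) then Lim (at_right 0) avg else 0)"

text \<open>BV trace Tu of u on \<partial>\<Omega> (Gauss--Green formula).\<close>
definition bv_trace :: "'a::euclidean_space set \<Rightarrow> ('a \<Rightarrow> 'a) \<Rightarrow> ('a \<Rightarrow> real) \<Rightarrow> 'a measure \<Rightarrow> ('a \<Rightarrow> 'a) \<Rightarrow> ('a \<Rightarrow> real) \<Rightarrow> bool" where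
  "bv_trace \<Omega> \<nu> u \<mu> \<sigma> Tu \<longleftrightarrow> integrable (bdry_measure \<Omega>) Tu \<and>
     (\<forall>\<phi> d\<phi>. C1c_vector UNIV \<phi> d\<phi> \<longrightarrow>
        (\<integral>x. u x * vdiv d\<phi> x \<partial>lebesgue_on \<Omega>) =
          - (\<integral>x. \<phi> x \<bullet> \<sigma> x \<partial>\<mu>) + (\<integral>x. (\<phi> x \<bullet> \<nu> x) * Tu x \<partial>bdry_measure \<Omega>))"

text \<open>Anzellotti's weak trace [z,\<nu>] \<in> L^\<infinity>(\<partial>\<Omega>) of the normal component of z.\<close>
definition weak_normal_trace :: "'a::euclidean_space set \<Rightarrow> ('a \<Rightarrow> 'a) \<Rightarrow> 'a measure \<Rightarrow> ('a \<Rightarrow> real) \<Rightarrow> ('a \<Rightarrow> real) \<Rightarrow> bool" where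
  "weak_normal_trace \<Omega> z \<mu> \<theta> \<beta> \<longleftrightarrow>
     \<beta> \<in> borel_measurable (bdry_measure \<Omega>) \<and> (\<exists>M. AE x in bdry_measure \<Omega>. \<bar>\<beta> x\<bar> \<le> M) \<and>
     (\<forall>\<phi> d\<phi>. C1c_scalar UNIV \<phi> d\<phi> \<longrightarrow>
        (\<integral>x. \<phi> x * \<theta> x \<partial>\<mu>) + (\<integral>x. z x \<bullet> d\<phi> x \<partial>lebesgue_on \<Omega>) =
          (\<integral>x. \<beta> x * \<phi> x \<partial>bdry_measure \<Omega>))"

definition is_solution ::
  "'a::euclidean_space set \<Rightarrow> ('a \<Rightarrow> 'a) \<Rightarrow> real \<Rightarrow> (real \<Rightarrow> ereal) \<Rightarrow> ('a \<Rightarrow> real)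
     \<Rightarrow> ('a \<Rightarrow> real \<Rightarrow> real) \<Rightarrow> ('a \<Rightarrow> real) \<Rightarrow> bool" where
  "is_solution \<Omega> \<nu> lam h f g u \<longleftrightarrow>
     linf_on \<Omega> u \<and> (AE x in lebesgue_on \<Omega>. u x \<ge> 0) \<and>
     (AE x in lebesgue_on \<Omega>. \<bar>h (u x) * ereal (f x)\<bar> \<noteq> \<infinity>) \<and>
     L1_loc \<Omega> (\<lambda>x. real_of_ereal (h (u x) * ereal (f x))) \<and>
     L1_loc \<Omega> (\<lambda>x. g x (u x)) \<and>
     (\<exists>\<mu>u \<sigma> z \<mu>z \<theta> Tu \<beta>.
        BV_polar \<Omega> u \<mu>u \<sigma> \<and>
        z \<in> borel_measurable (lebesgue_on \<Omega>) \<and> (AE x in lebesgue_on \<Omega>. norm (z x) \<le> 1) \<and>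
        div_polar \<Omega> z \<mu>z \<theta> \<and>
        (\<forall>\<phi> d\<phi>. C1c_scalar \<Omega> \<phi> d\<phi> \<longrightarrow>
           (\<integral>x. z x \<bullet> d\<phi> x \<partial>lebesgue_on \<Omega>) =
             (\<integral>x. (lam * real_of_ereal (h (u x) * ereal (f x)) + g x (u x)) * \<phi> x \<partial>lebesgue_on \<Omega>)) \<and>
        (\<forall>\<phi> d\<phi>. C1c_scalar \<Omega> \<phi> d\<phi> \<longrightarrow>
           - (\<integral>x. precise_rep u x * \<phi> x * \<theta> x \<partial>\<mu>z) - (\<integral>x. u x * (z x \<bullet> d\<phi> x) \<partial>lebesgue_on \<Omega>) =
             (\<integral>x. \<phi> x \<partial>\<mu>u)) \<and>
        bv_trace \<Omega> \<nu> u \<mu>u \<sigma> Tu \<and> weak_normal_trace \<Omega> z \<mu>z \<theta> \<beta> \<and>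
        (AE x in bdry_measure \<Omega>. Tu x + Tu x * \<beta> x = 0))"

end

theory Submission
  imports Defs
begin

lemma psi_deriv: "((\<lambda>t::real. (max 0 t)^2) has_real_derivative 2 * max 0 t) (at t)"
proof (cases "t = 0")
  case True
  have "((\<lambda>h::real. ((max 0 (0 + h))^2 - (max 0 0)^2) / h) \<longlongrightarrow> 2 * max 0 0) (at 0)"
  proof -
    have "((\<lambda>h::real. max 0 h) \<longlongrightarrow> max 0 0) (at 0)"
      by (intro tendsto_intros)
    then have lim: "((\<lambda>h::real. max 0 h) \<longlongrightarrow> 2 * max 0 0) (at 0)" by simp
    have ev: "\<forall>\<^sub>F h in at (0::real). max 0 h = ((max 0 (0 + h))^2 - (max 0 0)^2) / h"
      by (auto simp: eventually_at_filter power2_eq_square max_def)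
    show ?thesis by (rule Lim_transform_eventually[OF lim ev])
  qed
  then show ?thesis using True by (simp add: DERIV_def)
next
  case False
  show ?thesis
  proof (cases "t > 0")
    case True
    have "((\<lambda>t::real. t^2) has_real_derivative 2 * t) (at t)"
      by (auto intro!: derivative_eq_intros)
    then have d: "((\<lambda>t::real. t^2) has_real_derivative 2 * max 0 t) (at t)" using True by simp
    show ?thesis
      by (rule has_field_derivative_transform_within_open[OF d, of "{0<..}"]) (use True in auto)
  next
    case f2: False
    with False have "t < 0" by simp
    have d: "((\<lambda>t::real. 0) has_real_derivative 2 * max 0 t) (at t)" using \<open>t<0\<close> by simp
    show ?thesis
      by (rule has_field_derivative_transform_within_open[OF d, of "{..<0}"]) (use \<open>t<0\<close> in auto)
  qed
qed

lemma bump_deriv: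
  fixes x0 :: "'a::euclidean_space" and r :: real
  shows "((\<lambda>x. (max 0 (r^2 - (x - x0) \<bullet> (x - x0)))^2) has_derivative
     (\<lambda>v. ((-4 * max 0 (r^2 - (x - x0) \<bullet> (x - x0))) *\<^sub>R (x - x0)) \<bullet> v)) (at x)"
proof -
  have q: "((\<lambda>x. r^2 - (x - x0) \<bullet> (x - x0)) has_derivative (\<lambda>v. - (v \<bullet> (x - x0) + (x - x0) \<bullet> v))) (at x)"
    by (auto intro!: derivative_eq_intros)
  have p: "((\<lambda>t::real. (max 0 t)^2) has_derivative (\<lambda>h. (2 * max 0 (r^2 - (x - x0) \<bullet> (x - x0))) * h)) (at (r^2 - (x - x0) \<bullet> (x - x0)))"
    using psi_deriv[unfolded has_field_derivative_def] by simp
  have "((\<lambda>x. (max 0 (r^2 - (x - x0) \<bullet> (x - x0)))^2) has_derivative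
     (\<lambda>v. (2 * max 0 (r^2 - (x - x0) \<bullet> (x - x0))) * (- (v \<bullet> (x - x0) + (x - x0) \<bullet> v)))) (at x)"
    using has_derivative_compose[OF q p] by simp
  moreover have "(\<lambda>v. (2 * max 0 (r^2 - (x - x0) \<bullet> (x - x0))) * (- (v \<bullet> (x - x0) + (x - x0) \<bullet> v)))
     = (\<lambda>v. ((-4 * max 0 (r^2 - (x - x0) \<bullet> (x - x0))) *\<^sub>R (x - x0)) \<bullet> v)"
    by (rule ext) (simp add: inner_commute algebra_simps)
  ultimately show ?thesis by simp
qed

lemma bump_props:
  fixes x0 :: "'a::euclidean_space" and r :: real
  assumes r: "r > 0"
  and \<phi>_def: "\<phi> = (\<lambda>x. (max 0 (r^2 - (x - x0) \<bullet> (x - x0)))^2)"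
    and d\<phi>_def: "d\<phi> = (\<lambda>x. (-4 * max 0 (r^2 - (x - x0) \<bullet> (x - x0))) *\<^sub>R (x - x0))"
  shows "{x. \<phi> x \<noteq> 0} = ball x0 r" "closure {x. \<phi> x \<noteq> 0} = cball x0 r"
    "continuous_on UNIV d\<phi>" "continuous_on UNIV \<phi>" "\<And>x. norm (d\<phi> x) \<le> 4 * r^3"
    "\<And>x. 0 \<le> \<phi> x" "\<And>x. \<phi> x \<le> r^4" "\<And>x. x \<in> ball x0 r \<Longrightarrow> \<phi> x > 0"
    "\<And>x. (\<phi> has_derivative (\<lambda>v. d\<phi> x \<bullet> v)) (at x)"
proof -
  have nn: "(x - x0) \<bullet> (x - x0) = (dist x0 x)^2" for x
    by (simp add: dist_norm power2_norm_eq_inner[symmetric] norm_minus_commute)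
  show pos: "\<phi> x > 0" if "x \<in> ball x0 r" for x
  proof -
    have "dist x0 x < r" using that by simp
    then have "(dist x0 x)^2 < r^2" by (simp add: power_strict_mono)
    then show ?thesis unfolding \<phi>_def nn by simp
  qed
  show S: "{x. \<phi> x \<noteq> 0} = ball x0 r"
  proof safe
    fix x assume "\<phi> x \<noteq> 0"
    then have "r^2 - (dist x0 x)^2 > 0" unfolding \<phi>_def nn by (auto simp: max_def split: if_splits)
    then have "(dist x0 x)^2 < r^2" by simp
    then have "dist x0 x < r" using r by (smt (verit) power_mono zero_le_dist)
    then show "x \<in> ball x0 r" by simp
  next
    fix x assume "x \<in> ball x0 r" "\<phi> x = 0" then show False using pos by force
  qed
  show "closure {x. \<phi> x \<noteq> 0} = cball x0 r" unfolding S using r by simp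
  show "continuous_on UNIV d\<phi>" unfolding d\<phi>_def by (intro continuous_intros)
  show "continuous_on UNIV \<phi>" unfolding \<phi>_def by (intro continuous_intros)
  show "\<And>x. 0 \<le> \<phi> x" unfolding \<phi>_def by simp
  show "\<phi> x \<le> r^4" for x
  proof -
    have "max 0 (r^2 - (x - x0) \<bullet> (x - x0)) \<le> r^2" unfolding nn by simp
    then have "(max 0 (r^2 - (x - x0) \<bullet> (x - x0)))^2 \<le> (r^2)^2"
      by (intro power_mono) auto
    then show ?thesis unfolding \<phi>_def by (simp add: power_mult[symmetric])
  qed
  show "norm (d\<phi> x) \<le> 4 * r^3" for x
  proof (cases "dist x0 x < r")
    case True
    have "norm (d\<phi> x) = 4 * max 0 (r^2 - (dist x0 x)^2) * dist x0 x"
      unfolding d\<phi>_def nn by (simp add: dist_norm norm_minus_commute)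
    also have "\<dots> \<le> 4 * r^2 * r"
      using True by (intro mult_mono) auto
    finally show ?thesis by (simp add: power3_eq_cube power2_eq_square)
  next
    case False
    then have "(dist x0 x)^2 \<ge> r^2" using r by (simp add: power_mono)
    then have "d\<phi> x = 0" unfolding d\<phi>_def nn by simp
    then show ?thesis using r by simp
  qed
  show "(\<phi> has_derivative (\<lambda>v. d\<phi> x \<bullet> v)) (at x)" for x
    unfolding \<phi>_def d\<phi>_def by (rule bump_deriv)
qed

theorem mainTheorem5:
  fixes \<Omega> :: "'a::euclidean_space set" and \<nu> :: "'a \<Rightarrow> 'a"
    and f :: "'a \<Rightarrow> real" and h :: "real \<Rightarrow> ereal" and g :: "'a \<Rightarrow> real \<Rightarrow> real"
    and \<kappa> :: "real \<Rightarrow> real" and x0 :: 'a and r c :: real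
  assumes "DIM('a) \<ge> 2" and "open \<Omega>" and "bounded \<Omega>" and "lipschitz_boundary \<Omega>"
    and "outward_normal \<Omega> \<nu>"
    and "weak_LN \<Omega> f" and "AE x in lebesgue_on \<Omega>. f x \<ge> 0"
    and "continuous_on {0..} h" and "\<forall>s\<ge>0. h s > 0"
    and "caratheodory \<Omega> g" and "\<forall>x\<in>\<Omega>. \<forall>s\<ge>0. g x s \<ge> 0"
    and "r > 0" and "cball x0 r \<subseteq> \<Omega>" and "c > 0"
    and "\<forall>s\<ge>0. \<kappa> s \<ge> 0" and "filterlim \<kappa> at_top at_top"
    and "AE x in lebesgue_on (ball x0 r). f x \<ge> c"
    and "AE x in lebesgue_on (ball x0 r). \<forall>s\<ge>0. g x s \<ge> \<kappa> s"
  shows "\<exists>lam0>0. \<forall>lam\<ge>lam0. \<not> (\<exists>u. is_solution \<Omega> \<nu> lam h f g u)"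
proof -
  note A = assms
  have r: "r > 0" and c: "c > 0" using A by auto
  define \<phi> where "\<phi> = (\<lambda>x. (max 0 (r^2 - (x - x0) \<bullet> (x - x0)))^2)"
  define d\<phi> where "d\<phi> = (\<lambda>x. (-4 * max 0 (r^2 - (x - x0) \<bullet> (x - x0))) *\<^sub>R (x - x0))"
  note BP = bump_props[OF r \<phi>_def d\<phi>_def]
  have C1: "C1c_scalar \<Omega> \<phi> d\<phi>"
    unfolding C1c_scalar_def using BP A(13) by auto
  have \<Omega>lm: "\<Omega> \<in> lmeasurable" using A(2,3) by (simp add: lmeasurable_open)
  then have \<Omega>set: "\<Omega> \<in> sets lebesgue" by (simp add: fmeasurableD)
  have FM: "finite_measure (lebesgue_on \<Omega>)" using \<Omega>lm by (rule finite_measure_lebesgue_on)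
  have sp: "space (lebesgue_on \<Omega>) = \<Omega>" by simp
  have bset: "ball x0 r \<in> sets lebesgue" by (simp add: fmeasurableD)
  have ball\<Omega>: "ball x0 r \<subseteq> \<Omega>" using A(13) by auto
  have \<phi>meas: "\<phi> \<in> borel_measurable (lebesgue_on S)" if "S \<in> sets lebesgue" for S
    by (rule continuous_imp_measurable_on_sets_lebesgue[OF continuous_on_subset[OF BP(4)] that]) simp
  have int\<phi>: "integrable (lebesgue_on \<Omega>) \<phi>"
    by (rule finite_measure.integrable_const_bound[OF FM, where B="r^4"])
       (use BP(6,7) \<phi>meas[OF \<Omega>set] in auto)
  define I where "I = (\<integral>x. \<phi> x \<partial>lebesgue_on \<Omega>)"
  have "I \<ge> 0" unfolding I_def using BP(6) by (simp add: integral_nonneg)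
  moreover have "I \<noteq> 0"
  proof
    assume "I = 0"
    then have "AE x in lebesgue_on \<Omega>. \<phi> x = 0"
      using integral_nonneg_eq_0_iff_AE[OF int\<phi>] BP(6) unfolding I_def by auto
    then have "AE x in lebesgue. x \<in> \<Omega> \<longrightarrow> \<phi> x = 0"
      using \<Omega>set by (simp add: AE_restrict_space_iff)
    then have "AE x in lebesgue. x \<notin> ball x0 r"
      by (rule eventually_mono) (use ball\<Omega> BP(8) in force)
    then have "ball x0 r \<in> null_sets lebesgue" using AE_iff_null_sets[OF bset] by simp
    then have "negligible (ball x0 r)" by (metis negligible_iff_null_sets)
    moreover have "\<not> negligible (ball x0 r)" using r by (intro open_not_negligible) auto
    ultimately show False by simp
  qed
  ultimately have Ipos: "I > 0" by simp
  define M where "M = measure (lebesgue_on \<Omega>) (space (lebesgue_on \<Omega>))"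
  have "M \<ge> 0" unfolding M_def by simp
  define G where "G = 4 * r^3 * M"
  have "G \<ge> 0" unfolding G_def using r \<open>M \<ge> 0\<close> by simp
  define K where "K = (G + 1) / I"
  have Kpos: "K > 0" unfolding K_def using Ipos \<open>G\<ge>0\<close> by simp
  have KI: "K * I = G + 1" unfolding K_def using Ipos by simp
  have "eventually (\<lambda>s. K \<le> \<kappa> s) at_top" using A(16) by (simp add: filterlim_at_top)
  then obtain N where N: "\<And>s. s \<ge> N \<Longrightarrow> K \<le> \<kappa> s" by (auto simp: eventually_at_top_linorder)
  define s0 where "s0 = max N 0"
  have s0: "s0 \<ge> 0" "\<And>s. s \<ge> s0 \<Longrightarrow> K \<le> \<kappa> s" using N unfolding s0_def by auto
  have "continuous_on {0..s0} h" using A(8) by (rule continuous_on_subset) auto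
  then obtain xm where xm: "xm \<in> {0..s0}" "\<And>y. y \<in> {0..s0} \<Longrightarrow> h xm \<le> h y"
    using continuous_attains_inf[of "{0..s0}" h] s0(1) by auto
  have "0 < h xm" using A(9) xm(1) by auto
  then obtain m0 where m0: "0 < ereal m0" "ereal m0 < h xm" using ereal_dense2 by blast
  have m0pos: "m0 > 0" using m0(1) by simp
  have hm: "ereal m0 \<le> h s" if "s \<in> {0..s0}" for s using m0(2) xm(2)[OF that] by simp
  define lam0 where "lam0 = K / (m0 * c)"
  have lam0pos: "lam0 > 0" unfolding lam0_def using Kpos m0pos c by simp
  show ?thesis
  proof (intro exI[of _ lam0] conjI allI impI notI)
    show "lam0 > 0" by (rule lam0pos)
    fix lam assume lam: "lam \<ge> lam0"
    assume "\<exists>u. is_solution \<Omega> \<nu> lam h f g u"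
    then obtain u where "is_solution \<Omega> \<nu> lam h f g u" by blast
    then have AEu: "AE x in lebesgue_on \<Omega>. u x \<ge> 0"
      and AEh: "AE x in lebesgue_on \<Omega>. \<bar>h (u x) * ereal (f x)\<bar> \<noteq> \<infinity>"
      and L1h: "L1_loc \<Omega> (\<lambda>x. real_of_ereal (h (u x) * ereal (f x)))"
      and L1g: "L1_loc \<Omega> (\<lambda>x. g x (u x))"
      and ex: "\<exists>\<mu>u \<sigma> z \<mu>z \<theta> Tu \<beta>. (AE x in lebesgue_on \<Omega>. norm ((z::'a\<Rightarrow>'a) x) \<le> 1) \<and>
        (\<forall>\<phi> d\<phi>. C1c_scalar \<Omega> \<phi> d\<phi> \<longrightarrow>
           (\<integral>x. z x \<bullet> d\<phi> x \<partial>lebesgue_on \<Omega>) =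
             (\<integral>x. (lam * real_of_ereal (h (u x) * ereal (f x)) + g x (u x)) * \<phi> x \<partial>lebesgue_on \<Omega>))"
      unfolding is_solution_def by blast+
    from ex obtain z :: "'a \<Rightarrow> 'a" where z1: "AE x in lebesgue_on \<Omega>. norm (z x) \<le> 1"
      and zall: "\<forall>\<phi> d\<phi>. C1c_scalar \<Omega> \<phi> d\<phi> \<longrightarrow>
           (\<integral>x. z x \<bullet> d\<phi> x \<partial>lebesgue_on \<Omega>) =
             (\<integral>x. (lam * real_of_ereal (h (u x) * ereal (f x)) + g x (u x)) * \<phi> x \<partial>lebesgue_on \<Omega>)"
      by auto
    have zeq: "(\<integral>x. z x \<bullet> d\<phi> x \<partial>lebesgue_on \<Omega>) =
             (\<integral>x. (lam * real_of_ereal (h (u x) * ereal (f x)) + g x (u x)) * \<phi> x \<partial>lebesgue_on \<Omega>)"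
      using zall C1 by blast
    define Rh where "Rh = (\<lambda>x. real_of_ereal (h (u x) * ereal (f x)))"
    define Rg where "Rg = (\<lambda>x. g x (u x))"
    define F where "F = (\<lambda>x. (lam * Rh x + Rg x) * \<phi> x)"
    have eq: "(\<integral>x. z x \<bullet> d\<phi> x \<partial>lebesgue_on \<Omega>) = (\<integral>x. F x \<partial>lebesgue_on \<Omega>)"
      using zeq unfolding F_def Rh_def Rg_def by simp
    have "(\<integral>x. z x \<bullet> d\<phi> x \<partial>lebesgue_on \<Omega>) \<le> \<bar>\<integral>x. z x \<bullet> d\<phi> x \<partial>lebesgue_on \<Omega>\<bar>" by simp
    also have "\<dots> \<le> (\<integral>x. \<bar>z x \<bullet> d\<phi> x\<bar> \<partial>lebesgue_on \<Omega>)"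
      using integral_norm_bound[of "lebesgue_on \<Omega>" "\<lambda>x. z x \<bullet> d\<phi> x"] by simp
    also have "\<dots> \<le> (\<integral>x. 4 * r^3 \<partial>lebesgue_on \<Omega>)"
    proof (rule integral_mono_AE')
      show "integrable (lebesgue_on \<Omega>) (\<lambda>x. 4 * r^3)"
        by (rule finite_measure.integrable_const_bound[OF FM, where B="4*r^3"]) (use r in auto)
      show "AE x in lebesgue_on \<Omega>. 0 \<le> 4 * r^3" using r by simp
      show "AE x in lebesgue_on \<Omega>. \<bar>z x \<bullet> d\<phi> x\<bar> \<le> 4 * r^3"
        using z1
      proof (rule eventually_mono)
        fix x assume "norm (z x) \<le> 1"
        have "\<bar>z x \<bullet> d\<phi> x\<bar> \<le> norm (z x) * norm (d\<phi> x)" by (rule Cauchy_Schwarz_ineq2)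
        also have "\<dots> \<le> 1 * (4 * r^3)"
          using \<open>norm (z x) \<le> 1\<close> BP(5)[of x] by (intro mult_mono) auto
        finally show "\<bar>z x \<bullet> d\<phi> x\<bar> \<le> 4 * r^3" by simp
      qed
    qed
    also have "\<dots> = G" unfolding G_def M_def by (simp add: lebesgue_integral_const)
    finally have upper: "(\<integral>x. z x \<bullet> d\<phi> x \<partial>lebesgue_on \<Omega>) \<le> G" .
    have cb: "compact (cball x0 r)" "cball x0 r \<subseteq> \<Omega>" using A(13) by auto
    have cbset: "cball x0 r \<in> sets lebesgue" by (simp add: fmeasurableD)
    have iRh: "integrable (lebesgue_on (cball x0 r)) Rh"
      using L1h cb unfolding L1_loc_def Rh_def by blast
    have iRg: "integrable (lebesgue_on (cball x0 r)) Rg"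
      using L1g cb unfolding L1_loc_def Rg_def by blast
    have iFK: "integrable (lebesgue_on (cball x0 r)) F"
    proof (rule Bochner_Integration.integrable_bound)
      show "integrable (lebesgue_on (cball x0 r)) (\<lambda>x. r^4 * (\<bar>lam\<bar> * \<bar>Rh x\<bar> + \<bar>Rg x\<bar>))"
        using iRh iRg by (intro integrable_mult_right integrable_add integrable_abs) auto
      show "F \<in> borel_measurable (lebesgue_on (cball x0 r))"
        unfolding F_def using borel_measurable_integrable[OF iRh] borel_measurable_integrable[OF iRg]
          \<phi>meas[OF cbset] by measurable
      show "AE x in lebesgue_on (cball x0 r). norm (F x) \<le> norm (r^4 * (\<bar>lam\<bar> * \<bar>Rh x\<bar> + \<bar>Rg x\<bar>))"
      proof (rule AE_I2)
        fix x
        have "norm (F x) = \<bar>lam * Rh x + Rg x\<bar> * \<phi> x" unfolding F_def using BP(6)[of x] by (simp add: abs_mult)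
        also have "\<dots> \<le> (\<bar>lam\<bar> * \<bar>Rh x\<bar> + \<bar>Rg x\<bar>) * r^4"
          using BP(6,7)[of x] by (intro mult_mono) (auto simp: abs_mult intro: abs_triangle_ineq[THEN order_trans])
        also have "\<dots> \<le> norm (r^4 * (\<bar>lam\<bar> * \<bar>Rh x\<bar> + \<bar>Rg x\<bar>))" by (simp add: abs_mult)
        finally show "norm (F x) \<le> norm (r^4 * (\<bar>lam\<bar> * \<bar>Rh x\<bar> + \<bar>Rg x\<bar>))" .
      qed
    qed
    have iF: "integrable (lebesgue_on \<Omega>) F"
    proof -
      have I1: "integrable lebesgue (\<lambda>x. indicator (cball x0 r) x *\<^sub>R F x)"
        using iFK cbset by (simp add: integrable_restrict_space)
      have eqi: "indicator (cball x0 r) x *\<^sub>R F x = indicator \<Omega> x *\<^sub>R F x" for x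
      proof (cases "x \<in> cball x0 r")
        case True then show ?thesis using cb by (auto simp: indicator_def)
      next
        case False
        then have "\<phi> x = 0" using BP(1) by (metis (mono_tags) ball_subset_cball mem_Collect_eq subsetD)
        then show ?thesis by (simp add: F_def)
      qed
      have E: "(\<lambda>x. indicator (cball x0 r) x *\<^sub>R F x) = (\<lambda>x. indicator \<Omega> x *\<^sub>R F x)"
        by (rule ext) (rule eqi)
      have "integrable lebesgue (\<lambda>x. indicator \<Omega> x *\<^sub>R F x)"
        using I1 unfolding E .
      then show ?thesis using \<Omega>set by (simp add: integrable_restrict_space)
    qed
    have AEf: "AE x in lebesgue_on \<Omega>. x \<in> ball x0 r \<longrightarrow> c \<le> f x"
    proof -
      have "AE x in lebesgue. x \<in> ball x0 r \<longrightarrow> c \<le> f x"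
        using A(17) bset by (simp add: AE_restrict_space_iff)
      then have "AE x in lebesgue. x \<in> \<Omega> \<longrightarrow> x \<in> ball x0 r \<longrightarrow> c \<le> f x"
        by (rule eventually_mono) auto
      then show ?thesis using \<Omega>set by (simp add: AE_restrict_space_iff)
    qed
    have AEg: "AE x in lebesgue_on \<Omega>. x \<in> ball x0 r \<longrightarrow> (\<forall>s\<ge>0. \<kappa> s \<le> g x s)"
    proof -
      have "AE x in lebesgue. x \<in> ball x0 r \<longrightarrow> (\<forall>s\<ge>0. \<kappa> s \<le> g x s)"
        using A(18) bset by (simp add: AE_restrict_space_iff)
      then have "AE x in lebesgue. x \<in> \<Omega> \<longrightarrow> x \<in> ball x0 r \<longrightarrow> (\<forall>s\<ge>0. \<kappa> s \<le> g x s)"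
        by (rule eventually_mono) auto
      then show ?thesis using \<Omega>set by (simp add: AE_restrict_space_iff)
    qed
    have AE\<Omega>: "AE x in lebesgue_on \<Omega>. x \<in> \<Omega>"
      using \<Omega>set by (simp add: AE_restrict_space_iff)
    have AEK: "AE x in lebesgue_on \<Omega>. K * \<phi> x \<le> F x"
      using AEu AEh AEf AEg AE\<Omega>
    proof eventually_elim
      case (elim x)
      show ?case
      proof (cases "x \<in> ball x0 r")
        case False
        then have "\<phi> x = 0" using BP(1) by auto
        then show ?thesis by (simp add: F_def)
      next
        case True
        have fx: "c \<le> f x" using elim True by auto
        have gx: "\<And>s. s \<ge> 0 \<Longrightarrow> \<kappa> s \<le> g x s" using elim True by auto
        have ux: "u x \<ge> 0" using elim by auto
        have Rg0: "Rg x \<ge> 0" unfolding Rg_def using A(11) elim ux by auto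
        have hpos: "h (u x) > 0" using A(9) ux by auto
        have "h (u x) * ereal (f x) \<ge> 0" using hpos fx c by (intro ereal_0_le_mult) auto
        then have Rh0: "Rh x \<ge> 0" unfolding Rh_def by (rule real_of_ereal_pos)
        have lampos: "lam > 0" using lam lam0pos by simp
        have key: "K \<le> lam * Rh x + Rg x"
        proof (cases "u x \<ge> s0")
          case True
          have "K \<le> \<kappa> (u x)" using s0(2)[OF True] .
          also have "\<dots> \<le> Rg x" unfolding Rg_def using gx ux by auto
          finally show ?thesis using Rh0 lampos by (smt (verit) mult_nonneg_nonneg)
        next
          case False
          then have hm': "ereal m0 \<le> h (u x)" using hm ux by auto
          have fin: "\<bar>h (u x) * ereal (f x)\<bar> \<noteq> \<infinity>" using elim by auto
          obtain a where a: "h (u x) = ereal a"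
          proof (cases "h (u x)")
            case (real a) then show ?thesis using that by simp
          next
            case PInf
            then have "h (u x) * ereal (f x) = \<infinity>" using PInf fx c by (simp add: ereal_mult_infty)
            moreover have "\<bar>\<infinity>\<bar> = (\<infinity>::ereal)" by simp
            ultimately have "\<bar>h (u x) * ereal (f x)\<bar> = \<infinity>" by (simp only:)
            then show ?thesis using fin by blast
          next
            case MInf then show ?thesis using hpos by simp
          qed
          have am: "m0 \<le> a" using hm' a by simp
          have "Rh x = a * f x" unfolding Rh_def a by simp
          moreover have "m0 * c \<le> a * f x" using am fx m0pos c by (intro mult_mono) auto
          ultimately have "m0 * c \<le> Rh x" by simp
          then have "lam0 * (m0 * c) \<le> lam * Rh x"
            using lam lam0pos m0pos c by (intro mult_mono) auto
          moreover have "lam0 * (m0 * c) = K" unfolding lam0_def using m0pos c by simp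
          ultimately show ?thesis using Rg0 by simp
        qed
        then show ?thesis unfolding F_def using BP(6)[of x] by (intro mult_right_mono) auto
      qed
    qed
    have "K * I = (\<integral>x. K * \<phi> x \<partial>lebesgue_on \<Omega>)" unfolding I_def by simp
    also have "\<dots> \<le> (\<integral>x. F x \<partial>lebesgue_on \<Omega>)"
      by (rule integral_mono_AE[OF integrable_mult_right[OF int\<phi>] iF AEK])
    finally have "K * I \<le> G" using eq upper by simp
    then show False using KI by simp
  qed
qed

end
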